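(* Let $c:[0,2\pi]\to\mathbb{R}^2$ be a regular closed plane curve of class $C^3$ with curvature $k_c$, let $r_0\in\mathbb{R}^2$, and let $p(t)=\langle c-r_0,N\rangle N+r_0$ be its pedal curve with respect to $r_0$. Then $p$ is strongly convex if and only if for all $t\in[0,2\pi)$ $$k_p(t):=\frac{k_c\{-2k_c\langle r_0-c,T\rangle^2+\langle r_0-c,N\rangle-2k_c\langle r_0-c,N\rangle^2\}}{\langle c,N\rangle\langle r_0,N\rangle+\langle c,T\rangle\langle r_0,T\rangle-\langle c,N\rangle^2-\langle r_0,T\rangle^2}>0,$$ where all quantities are evaluated at $t$.
   Context: For a regular plane curve $c(t)=(x(t),y(t))$, $T=\dot c/|\dot c|$ is the unit tangent, $N=(-\dot y,\dot x)/|\dot c|$ the unit normal, and $k_c=\langle \ddot c,N\rangle/|\dot c|^2$ the curvature, so that $\dot T=|\dot c|k_cN$, $\dot N=-|\dot c|k_cT$. The pedal curve of $c$ with respect to $r_0$ is $p(t)=\langle c(t)-r_0,N(t)\rangle N(t)+r_0$. For $u=(u_1,u_2),v=(v_1,v_2)$ set $u\times v=u_1v_2-u_2v_1$. A closed plane curve $p(t)$ is called strongly convex if $\dfrac{\dot p(t)\times\ddot p(t)}{p(t)\times\dot p(t)}>0$ for all $t$. *)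

theory Defs
  imports "HOL-Analysis.Analysis"
begin

definition cross2 :: "real \<times> real \<Rightarrow> real \<times> real \<Rightarrow> real" where
  "cross2 u v = fst u * snd v - snd u * fst v"

definition dot_c :: "(real \<Rightarrow> real \<times> real) \<Rightarrow> real \<Rightarrow> real \<times> real" where
  "dot_c c t = vector_derivative c (at t)"

definition ddot_c :: "(real \<Rightarrow> real \<times> real) \<Rightarrow> real \<Rightarrow> real \<times> real" where
  "ddot_c c t = vector_derivative (\<lambda>s. vector_derivative c (at s)) (at t)"

definition unit_tangent :: "(real \<Rightarrow> real \<times> real) \<Rightarrow> real \<Rightarrow> real \<times> real" where
  "unit_tangent c t = (1 / norm (dot_c c t)) *\<^sub>R dot_c c t"

definition unit_normal :: "(real \<Rightarrow> real \<times> real) \<Rightarrow> real \<Rightarrow> real \<times> real" where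
  "unit_normal c t = (1 / norm (dot_c c t)) *\<^sub>R (- snd (dot_c c t), fst (dot_c c t))"

definition curvature :: "(real \<Rightarrow> real \<times> real) \<Rightarrow> real \<Rightarrow> real" where
  "curvature c t = inner (ddot_c c t) (unit_normal c t) / (norm (dot_c c t))\<^sup>2"

definition pedal :: "(real \<Rightarrow> real \<times> real) \<Rightarrow> real \<times> real \<Rightarrow> real \<Rightarrow> real \<times> real" where
  "pedal c r0 t = inner (c t - r0) (unit_normal c t) *\<^sub>R unit_normal c t + r0"

text \<open>A closed curve parametrised over one period [0,2pi) (extended 2pi-periodically).\<close>
definition strongly_convex :: "(real \<Rightarrow> real \<times> real) \<Rightarrow> bool" where
  "strongly_convex p \<longleftrightarrow>
     (\<forall>t\<in>{0..<2*pi}. cross2 (dot_c p t) (ddot_c p t) / cross2 (p t) (dot_c p t) > 0)"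

definition pedal_curvature_kp :: "(real \<Rightarrow> real \<times> real) \<Rightarrow> real \<times> real \<Rightarrow> real \<Rightarrow> real" where
  "pedal_curvature_kp c r0 t =
     (let k = curvature c t; T = unit_tangent c t; N = unit_normal c t in
      k * (- 2 * k * (inner (r0 - c t) T)\<^sup>2 + inner (r0 - c t) N - 2 * k * (inner (r0 - c t) N)\<^sup>2)
      / (inner (c t) N * inner r0 N + inner (c t) T * inner r0 T - (inner (c t) N)\<^sup>2 - (inner r0 T)\<^sup>2))"

definition regular_closed_C3 :: "(real \<Rightarrow> real \<times> real) \<Rightarrow> bool" where
  "regular_closed_C3 c \<longleftrightarrow>
     (\<forall>t. c (t + 2*pi) = c t) \<and>
     (\<exists>c1 c2 c3. (\<forall>t. (c has_vector_derivative c1 t) (at t)) \<and>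
                 (\<forall>t. (c1 has_vector_derivative c2 t) (at t)) \<and>
                 (\<forall>t. (c2 has_vector_derivative c3 t) (at t)) \<and>
                 continuous_on UNIV c3 \<and> (\<forall>t. c1 t \<noteq> 0))"

end

theory Submission imports Defs begin

lemma algVV:
  fixes a b a2 b2 x y r1 r2 :: real
  shows "cross2 (((x-r1)*a+(y-r2)*b)*(-b) + (a*(y-r2)-b*(x-r1))*a, ((x-r1)*a+(y-r2)*b)*a + (a*(y-r2)-b*(x-r1))*b)
     ((a*a+b*b+(x-r1)*a2+(y-r2)*b2)*(-b) + ((x-r1)*a+(y-r2)*b)*(-b2) + (a2*(y-r2)-b2*(x-r1))*a + (a*(y-r2)-b*(x-r1))*a2,
      (a*a+b*b+(x-r1)*a2+(y-r2)*b2)*a + ((x-r1)*a+(y-r2)*b)*a2 + (a2*(y-r2)-b2*(x-r1))*b + (a*(y-r2)-b*(x-r1))*b2)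
   = (a*(y-r2)-b*(x-r1))*(a^2+b^2)^2 + 2*(a*b2-b*a2)*((a*(y-r2)-b*(x-r1))^2+((x-r1)*a+(y-r2)*b)^2)"
  unfolding cross2_def by (simp add: algebra_simps power2_eq_square)

lemma algPP:
  fixes a b a2 b2 x y r1 r2 :: real
  assumes "a^2+b^2 \<noteq> 0"
  shows "cross2 ((a*(y-r2)-b*(x-r1))/(a^2+b^2)*(-b)+r1, (a*(y-r2)-b*(x-r1))/(a^2+b^2)*a+r2)
     ((-(a*b2-b*a2)/(a^2+b^2)^2)*(((x-r1)*a+(y-r2)*b)*(-b) + (a*(y-r2)-b*(x-r1))*a),
      (-(a*b2-b*a2)/(a^2+b^2)^2)*(((x-r1)*a+(y-r2)*b)*a + (a*(y-r2)-b*(x-r1))*b))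
   = -(a*b2-b*a2)*(-((a*(y-r2)-b*(x-r1))^2) + ((x-r1)*a+(y-r2)*b)*(r1*a+r2*b) - (a*(y-r2)-b*(x-r1))*(-r1*b+r2*a))/(a^2+b^2)^2"
proof -
  have e: "(a*(y-r2)-b*(x-r1))/(a^2+b^2)*(-b)+r1 = ((a*(y-r2)-b*(x-r1))*(-b)+r1*(a^2+b^2))/(a^2+b^2)"
     "(a*(y-r2)-b*(x-r1))/(a^2+b^2)*a+r2 = ((a*(y-r2)-b*(x-r1))*a+r2*(a^2+b^2))/(a^2+b^2)"
    using assms by (simp_all add: field_simps)
  show ?thesis unfolding e cross2_def using assms
    apply (simp add: divide_simps)
    apply (simp add: algebra_simps power2_eq_square)
    done
qed

lemma algKP:
  fixes c :: "real \<Rightarrow> real \<times> real" and a b a2 b2 x y r1 r2 :: real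
  assumes d: "dot_c c t = (a,b)" and dd: "ddot_c c t = (a2,b2)" and ct: "c t = (x,y)"
    and r: "r0 = (r1,r2)" and nz: "a^2+b^2 \<noteq> 0"
  shows "pedal_curvature_kp c r0 t =
    -((a*b2-b*a2)*(a*(y-r2)-b*(x-r1))/(a^2+b^2)^2 + 2*(a*b2-b*a2)^2*((a*(y-r2)-b*(x-r1))^2+((x-r1)*a+(y-r2)*b)^2)/(a^2+b^2)^4)
     *(a^2+b^2)/(-((a*(y-r2)-b*(x-r1))^2) + ((x-r1)*a+(y-r2)*b)*(r1*a+r2*b) - (a*(y-r2)-b*(x-r1))*(-r1*b+r2*a))"
proof -
  define s where "s = sqrt (a^2+b^2)"
  define n where "n = a^2+b^2"
  define K where "K = a*b2-b*a2"
  define F where "F = a*(y-r2)-b*(x-r1)"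
  define W where "W = (x-r1)*a+(y-r2)*b"
  define Dn where "Dn = -(F^2) + W*(r1*a+r2*b) - F*(-r1*b+r2*a)"
  have n0: "n > 0" using nz unfolding n_def by (simp add: add_pos_nonneg sum_power2_gt_zero_iff)
  have s0: "s > 0" using n0 unfolding s_def n_def by simp
  have s2: "s^2 = n" unfolding s_def n_def using n0[unfolded n_def] by simp
  have s4: "s^4 = n^2" using s2 by (metis power_mult numeral_Bit0 mult_2_right power2_eq_square power_add)
  have s8: "s^8 = n^4" using s4 by (metis power_mult num_double numeral_times_numeral power2_eq_square power_add mult_2)
  have ns': "norm (a,b) = s" unfolding s_def norm_Pair by simp
  have ns: "norm (dot_c c t) = s" unfolding d ns' ..
  have T: "unit_tangent c t = (a/s, b/s)" unfolding unit_tangent_def d ns' by simp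
  have N: "unit_normal c t = (-b/s, a/s)" unfolding unit_normal_def d ns' by simp
  have k: "curvature c t = K/s^3" unfolding curvature_def ns dd N K_def using s0
    by (simp add: field_simps power2_eq_square power3_eq_cube)
  have i1: "inner (r0 - c t) (unit_tangent c t) = - W/s" unfolding T r ct W_def
    by (simp add: diff_divide_distrib add_divide_distrib[symmetric] algebra_simps)
  have i2: "inner (r0 - c t) (unit_normal c t) = - F/s" unfolding N r ct F_def
    by (simp add: diff_divide_distrib add_divide_distrib[symmetric] algebra_simps)
  have den: "inner (c t) (unit_normal c t) * inner r0 (unit_normal c t) + inner (c t) (unit_tangent c t) * inner r0 (unit_tangent c t)
      - (inner (c t) (unit_normal c t))\<^sup>2 - (inner r0 (unit_tangent c t))\<^sup>2 = Dn / s^2"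
    unfolding N T r ct Dn_def F_def W_def using s0
    by (simp add: field_simps power2_eq_square)
  have num: "K/s^3 * (-2*(K/s^3)*(-W/s)^2 + (-F/s) - 2*(K/s^3)*(-F/s)^2) = -(K*F/s^4 + 2*K^2*(F^2+W^2)/s^8)"
    using s0 by (simp add: field_simps power2_eq_square power3_eq_cube) (simp add: algebra_simps power_numeral_reduce)
  have "pedal_curvature_kp c r0 t = -(K*F/n^2 + 2*K^2*(F^2+W^2)/n^4) / (Dn/n)"
    unfolding pedal_curvature_kp_def Let_def k i1 i2 den num s4 s8 s2 ..
  also have "\<dots> = -(K*F/n^2 + 2*K^2*(F^2+W^2)/n^4) * n / Dn" by simp
  finally show ?thesis unfolding K_def F_def W_def n_def Dn_def .
qed

lemma final_alg:
  fixes K n F W Dn :: real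
  assumes "n > 0"
  shows "((-K/n^2)^2 * (F*n^2 + 2*K*(F^2+W^2))) / (-K*Dn/n^2) =
     n * (-(K*F/n^2 + 2*K^2*(F^2+W^2)/n^4)*n/Dn)"
proof (cases "K = 0 \<or> Dn = 0")
  case True then show ?thesis by auto
next
  case False
  then show ?thesis using assms by (simp add: field_simps power2_eq_square power4_eq_xxxx)
qed

theorem mainTheorem3:
  fixes c :: "real \<Rightarrow> real \<times> real" and r0 :: "real \<times> real"
  assumes "regular_closed_C3 c"
  shows "strongly_convex (pedal c r0) \<longleftrightarrow> (\<forall>t\<in>{0..<2*pi}. pedal_curvature_kp c r0 t > 0)"
proof -
  obtain c1 c2 c3 where c1: "\<And>t. (c has_vector_derivative c1 t) (at t)"
    and c2: "\<And>t. (c1 has_vector_derivative c2 t) (at t)"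
    and c3: "\<And>t. (c2 has_vector_derivative c3 t) (at t)"
    and nz: "\<And>t. c1 t \<noteq> 0"
    using assms unfolding regular_closed_C3_def by metis
  obtain r1 r2 where r: "r0 = (r1,r2)" by fastforce
  define x where "x t = fst (c t)" for t
  define y where "y t = snd (c t)" for t
  define a where "a t = fst (c1 t)" for t
  define b where "b t = snd (c1 t)" for t
  define a2 where "a2 t = fst (c2 t)" for t
  define b2 where "b2 t = snd (c2 t)" for t
  define a3 where "a3 t = fst (c3 t)" for t
  define b3 where "b3 t = snd (c3 t)" for t
  have fd: "\<And>f f' t. (f has_vector_derivative f') (at t) \<Longrightarrow> ((\<lambda>t. fst (f t)) has_real_derivative fst f') (at t)"
    unfolding has_real_derivative_iff_has_vector_derivative
    by (rule bounded_linear.has_vector_derivative[OF bounded_linear_fst])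
  have sd: "\<And>f f' t. (f has_vector_derivative f') (at t) \<Longrightarrow> ((\<lambda>t. snd (f t)) has_real_derivative snd f') (at t)"
    unfolding has_real_derivative_iff_has_vector_derivative
    by (rule bounded_linear.has_vector_derivative[OF bounded_linear_snd])
  have dx: "\<And>t. (x has_real_derivative a t) (at t)" unfolding x_def a_def by (rule fd[OF c1])
  have dy: "\<And>t. (y has_real_derivative b t) (at t)" unfolding y_def b_def by (rule sd[OF c1])
  have da: "\<And>t. (a has_real_derivative a2 t) (at t)" unfolding a2_def a_def by (rule fd[OF c2])
  have db: "\<And>t. (b has_real_derivative b2 t) (at t)" unfolding b2_def b_def by (rule sd[OF c2])
  have da2: "\<And>t. (a2 has_real_derivative a3 t) (at t)" unfolding a2_def a3_def by (rule fd[OF c3])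
  have db2: "\<And>t. (b2 has_real_derivative b3 t) (at t)" unfolding b2_def b3_def by (rule sd[OF c3])
  have nz2: "\<And>t. a t ^2 + b t^2 \<noteq> 0"
    using nz unfolding a_def b_def by (metis prod.collapse sum_power2_eq_zero_iff zero_prod_def)
  have dotc: "\<And>t. dot_c c t = (a t, b t)" unfolding dot_c_def a_def b_def
    using vector_derivative_at[OF c1] by simp
  have vc: "(\<lambda>s. vector_derivative c (at s)) = c1" using vector_derivative_at[OF c1] by auto
  have ddotc: "\<And>t. ddot_c c t = (a2 t, b2 t)" unfolding ddot_c_def vc a2_def b2_def
    using vector_derivative_at[OF c2] by simp
  define n where "n t = a t ^2 + b t^2" for t
  define F where "F t = a t*(y t-r2)-b t*(x t-r1)" for t
  define W where "W t = (x t-r1)*a t+(y t-r2)*b t" for t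
  define K where "K t = a t*b2 t-b t*a2 t" for t
  define L where "L t = -K t / n t^2" for t
  define P where "P t = F t / n t * (-b t) + r1" for t
  define Q where "Q t = F t / n t * a t + r2" for t
  define V1 where "V1 t = W t*(-b t) + F t*a t" for t
  define V2 where "V2 t = W t*a t + F t*b t" for t
  have ped: "pedal c r0 = (\<lambda>t. (P t, Q t))"
  proof
    fix t
    have s2: "(norm (a t, b t))^2 = n t" unfolding n_def norm_Pair by simp
    have s0: "norm (a t, b t) \<noteq> 0" using nz2[of t] s2 unfolding n_def by auto
    have ct: "c t = (x t, y t)" unfolding x_def y_def by simp
    define s where "s = norm (a t, b t)"
    have e: "inner (c t - r0) (unit_normal c t) = F t / s"
      unfolding unit_normal_def dotc ct r F_def s_def[symmetric] using s0
      by (simp add: field_simps s_def)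
    have "pedal c r0 t = (F t / s * (-b t / s) + r1, F t / s * (a t / s) + r2)"
      unfolding pedal_def e unfolding unit_normal_def dotc r s_def[symmetric] by simp
    also have "\<dots> = (P t, Q t)" unfolding P_def Q_def using s0 s2 unfolding s_def[symmetric]
      by (simp add: field_simps power2_eq_square)
    finally show "pedal c r0 t = (P t, Q t)" .
  qed
  have nz3: "n t \<noteq> 0" for t using nz2 unfolding n_def by auto
  have dn: "(n has_real_derivative 2*(a t*a2 t+b t*b2 t)) (at t)" for t
    unfolding n_def
    apply (rule DERIV_cong)
     apply (auto intro!: derivative_eq_intros dx dy da db)[1]
    by (simp add: algebra_simps)
  have dF: "(F has_real_derivative a2 t*(y t-r2)-b2 t*(x t-r1)) (at t)" for t
    unfolding F_def
    apply (rule DERIV_cong)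
     apply (auto intro!: derivative_eq_intros dx dy da db)[1]
    by (simp add: algebra_simps)
  have dP: "(P has_real_derivative L t * V1 t) (at t)" for t
    unfolding P_def
    apply (rule DERIV_cong)
     apply (auto intro!: derivative_eq_intros dn dF db nz3)[1]
    using nz3[of t] unfolding L_def V1_def
    apply (simp add: field_simps power2_eq_square)
    unfolding W_def F_def K_def n_def
    by (simp add: algebra_simps power2_eq_square)
  have dQ: "(Q has_real_derivative L t * V2 t) (at t)" for t
    unfolding Q_def
    apply (rule DERIV_cong)
     apply (auto intro!: derivative_eq_intros dn dF da nz3)[1]
    using nz3[of t] unfolding L_def V2_def
    apply (simp add: field_simps power2_eq_square)
    unfolding W_def F_def K_def n_def
    by (simp add: algebra_simps power2_eq_square)
  define Kd where "Kd t = a t*b3 t - b t*a3 t" for t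
  define nd where "nd t = 2*(a t*a2 t+b t*b2 t)" for t
  define Ld where "Ld t = -(Kd t*n t^2 - K t*(2*n t*nd t))/(n t^2)^2" for t
  define Wd where "Wd t = a t*a t+b t*b t+(x t-r1)*a2 t+(y t-r2)*b2 t" for t
  define Fd where "Fd t = a2 t*(y t-r2)-b2 t*(x t-r1)" for t
  define V1d where "V1d t = Wd t*(-b t) + W t*(-b2 t) + Fd t*a t + F t*a2 t" for t
  define V2d where "V2d t = Wd t*a t + W t*a2 t + Fd t*b t + F t*b2 t" for t
  have dK: "(K has_real_derivative Kd t) (at t)" for t
    unfolding K_def Kd_def
    apply (rule DERIV_cong)
     apply (auto intro!: derivative_eq_intros da db da2 db2)[1]
    by (simp add: algebra_simps)
  have dL: "(L has_real_derivative Ld t) (at t)" for t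
    unfolding L_def
    apply (rule DERIV_cong)
     apply (auto intro!: derivative_eq_intros dK dn simp: nz3)[1]
    unfolding Ld_def nd_def
    apply (simp add: power2_eq_square algebra_simps) by (metis minus_diff_eq minus_divide_left)
  have dW: "(W has_real_derivative Wd t) (at t)" for t
    unfolding W_def Wd_def
    apply (rule DERIV_cong)
     apply (auto intro!: derivative_eq_intros dx dy da db)[1]
    by (simp add: algebra_simps)
  have dV1: "(V1 has_real_derivative V1d t) (at t)" for t
    unfolding V1_def V1d_def
    apply (rule DERIV_cong)
     apply (auto intro!: derivative_eq_intros dW dF da db)[1]
    unfolding Fd_def by (simp add: algebra_simps)
  have dV2: "(V2 has_real_derivative V2d t) (at t)" for t
    unfolding V2_def V2d_def
    apply (rule DERIV_cong)
     apply (auto intro!: derivative_eq_intros dW dF da db)[1]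
    unfolding Fd_def by (simp add: algebra_simps)
  have dP1: "((\<lambda>t. L t * V1 t) has_real_derivative Ld t * V1 t + L t * V1d t) (at t)" for t
    apply (rule DERIV_cong)
     apply (auto intro!: derivative_eq_intros dL dV1)[1]
    by (simp add: algebra_simps)
  have dQ1: "((\<lambda>t. L t * V2 t) has_real_derivative Ld t * V2 t + L t * V2d t) (at t)" for t
    apply (rule DERIV_cong)
     apply (auto intro!: derivative_eq_intros dL dV2)[1]
    by (simp add: algebra_simps)
  have hv: "\<And>f g f' g' t. (f has_real_derivative f') (at t) \<Longrightarrow> (g has_real_derivative g') (at t) \<Longrightarrow>
      vector_derivative (\<lambda>t. (f t, g t)) (at t) = (f', g')"
    by (rule vector_derivative_at, rule has_vector_derivative_Pair,
        simp_all add: has_real_derivative_iff_has_vector_derivative)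
  have dotp: "dot_c (pedal c r0) t = (L t * V1 t, L t * V2 t)" for t
    unfolding dot_c_def ped by (rule hv[OF dP dQ])
  have vp: "(\<lambda>s. vector_derivative (pedal c r0) (at s)) = (\<lambda>s. (L s * V1 s, L s * V2 s))"
    using dotp unfolding dot_c_def by auto
  have ddotp: "ddot_c (pedal c r0) t = (Ld t * V1 t + L t * V1d t, Ld t * V2 t + L t * V2d t)" for t
    unfolding ddot_c_def vp by (rule hv[OF dP1 dQ1])
  define Dn where "Dn t = -((F t)^2) + W t*(r1*a t+r2*b t) - F t*(-r1*b t+r2*a t)" for t
  have ratio: "cross2 (dot_c (pedal c r0) t) (ddot_c (pedal c r0) t) / cross2 (pedal c r0 t) (dot_c (pedal c r0) t)
     = n t * pedal_curvature_kp c r0 t" for t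
  proof -
    have ct: "c t = (x t, y t)" unfolding x_def y_def by simp
    have "cross2 (dot_c (pedal c r0) t) (ddot_c (pedal c r0) t) = (L t)^2 * cross2 (V1 t, V2 t) (V1d t, V2d t)"
      unfolding dotp ddotp cross2_def by (simp add: algebra_simps power2_eq_square)
    also have "cross2 (V1 t, V2 t) (V1d t, V2d t) = F t*(n t)^2 + 2*K t*((F t)^2+(W t)^2)"
      unfolding V1_def V2_def V1d_def V2d_def Wd_def Fd_def W_def F_def n_def K_def by (rule algVV)
    finally have e1: "cross2 (dot_c (pedal c r0) t) (ddot_c (pedal c r0) t) = (-K t/(n t)^2)^2 * (F t*(n t)^2 + 2*K t*((F t)^2+(W t)^2))"
      unfolding L_def .
    have e2: "cross2 (pedal c r0 t) (dot_c (pedal c r0) t) = -K t*Dn t/(n t)^2"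
      unfolding dotp unfolding ped P_def Q_def L_def V1_def V2_def Dn_def W_def F_def n_def K_def
      by (rule algPP[OF nz2])
    have kp: "pedal_curvature_kp c r0 t = -(K t*F t/(n t)^2 + 2*(K t)^2*((F t)^2+(W t)^2)/(n t)^4)*n t/Dn t"
      unfolding Dn_def W_def F_def n_def K_def by (rule algKP[OF dotc ddotc ct r nz2])
    have np: "n t > 0" using nz3[of t] unfolding n_def by (simp add: add_pos_nonneg sum_power2_gt_zero_iff)
    show ?thesis unfolding e1 e2 kp by (rule final_alg[OF np])
  qed
  have np: "n t > 0" for t using nz3[of t] unfolding n_def by (simp add: add_pos_nonneg sum_power2_gt_zero_iff)
  show ?thesis unfolding strongly_convex_def ratio using np by (simp add: zero_less_mult_iff) (meson not_less_iff_gr_or_eq np)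
qed
end
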